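(* Let $q\in(0,1)$, $\alpha\in(-1,1)$ and $\beta<1$ real, $z\in\mathbb{C}\setminus\{0\}$ and $n\ge-1$. Then \begin{align*} p_n^{(\alpha,\beta)}(z+z^{-1};q)=\frac{1}{z^{-1}-z}\frac{(\alpha;q)_n}{(\beta;q)_n}\Big[&z^{-n-1}\,{}_2\phi_1\!\left(z\tau,z\tau^{-1};qz^2;q,\alpha\right){}_2\phi_1\!\left(z^{-1}\tau,z^{-1}\tau^{-1};qz^{-2};q,\alpha q^{n+1}\right)\\ &-z^{n+1}\,{}_2\phi_1\!\left(z^{-1}\tau,z^{-1}\tau^{-1};qz^{-2};q,\alpha\right){}_2\phi_1\!\left(z\tau,z\tau^{-1};qz^{2};q,\alpha q^{n+1}\right)\Big], \end{align*} where for $z\in\pm q^{\mathbb{Z}/2}$ the right-hand side is understood as the corresponding limit value.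
   Context: $(a;q)_n:=\prod_{j=0}^{n-1}(1-aq^j)$ for $n\in\mathbb{N}_0\cup\{\infty\}$, and for $n=-1$, $(a;q)_{-1}:=(1-aq^{-1})^{-1}$. The polynomials $p_n^{(\alpha,\beta)}(x;q)$ are defined by $p_{-1}=0$, $p_0=1$, $p_{n+1}(x)=xp_n(x)-\tilde\gamma_{n-1}\tilde\gamma_np_{n-1}(x)$ for $n\in\mathbb{N}_0$, where $\tilde\gamma_n=(1-\alpha q^n)/(1-\beta q^n)$. The $q$-Gauss series is ${}_2\phi_1(a,b;c;q,w)=\sum_{k\ge0}\frac{(a,b;q)_k}{(c,q;q)_k}w^k$. Here $\tau$ is any nonzero number with $\alpha(\tau+\tau^{-1})=\beta(z+z^{-1})$; the series depend only on this relation, since $\alpha^k(z\tau,z\tau^{-1};q)_k=\prod_{j=0}^{k-1}(\alpha(1+z^2q^{2j})-\beta q^j(1+z^2))$, and for $\alpha=0$ the terms are defined by this product expression. *)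

theory Defs
  imports "HOL-Analysis.Analysis"
begin

definition qpoch :: "complex \<Rightarrow> complex \<Rightarrow> nat \<Rightarrow> complex" where
  "qpoch a q n = (\<Prod>j<n. 1 - a * q ^ j)"

definition qpochZ :: "complex \<Rightarrow> complex \<Rightarrow> int \<Rightarrow> complex" where
  "qpochZ a q n = (if n \<ge> 0 then qpoch a q (nat n)
                   else if n = -1 then inverse (1 - a / q) else undefined)"

definition gt :: "real \<Rightarrow> real \<Rightarrow> real \<Rightarrow> int \<Rightarrow> real" where
  "gt \<alpha> \<beta> q n = (1 - \<alpha> * q powi n) / (1 - \<beta> * q powi n)"

text \<open>pp alpha beta q m x = p_{m-1}^{(alpha,beta)}(x;q), i.e. index shifted by one:
  pp 0 = p_{-1} = 0, pp 1 = p_0 = 1,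
  p_{k+1}(x) = x p_k(x) - gt_{k-1} gt_k p_{k-1}(x).\<close>
fun pp :: "real \<Rightarrow> real \<Rightarrow> real \<Rightarrow> nat \<Rightarrow> complex \<Rightarrow> complex" where
  "pp \<alpha> \<beta> q 0 x = 0"
| "pp \<alpha> \<beta> q (Suc 0) x = 1"
| "pp \<alpha> \<beta> q (Suc (Suc k)) x =
     x * pp \<alpha> \<beta> q (Suc k) x
     - complex_of_real (gt \<alpha> \<beta> q (int k - 1) * gt \<alpha> \<beta> q (int k)) * pp \<alpha> \<beta> q k x"

definition pol :: "int \<Rightarrow> real \<Rightarrow> real \<Rightarrow> real \<Rightarrow> complex \<Rightarrow> complex" where
  "pol n \<alpha> \<beta> q x = pp \<alpha> \<beta> q (nat (n + 1)) x"

text \<open>alpha^k (z tau, z tau^{-1}; q)_k, written via the product expression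
  (valid for any tau with alpha(tau + 1/tau) = beta(z + 1/z); used as definition also for alpha = 0).\<close>
definition apoch :: "real \<Rightarrow> real \<Rightarrow> real \<Rightarrow> complex \<Rightarrow> nat \<Rightarrow> complex" where
  "apoch \<alpha> \<beta> q z k = (\<Prod>j<k. of_real \<alpha> * (1 + z^2 * of_real q ^ (2*j))
                                 - of_real \<beta> * of_real q ^ j * (1 + z^2))"

text \<open>phi \<alpha> \<beta> q z t = 2phi1(z tau, z tau^{-1}; q z^2; q, alpha t), i.e.
  sum_k alpha^k (z tau, z tau^{-1};q)_k t^k / ((q z^2, q; q)_k).\<close>
definition phi :: "real \<Rightarrow> real \<Rightarrow> real \<Rightarrow> complex \<Rightarrow> complex \<Rightarrow> complex" where
  "phi \<alpha> \<beta> q z t = (\<Sum>k. apoch \<alpha> \<beta> q z k * t ^ k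
                       / (qpoch (of_real q * z^2) (of_real q) k * qpoch (of_real q) (of_real q) k))"

definition rhs :: "int \<Rightarrow> real \<Rightarrow> real \<Rightarrow> real \<Rightarrow> complex \<Rightarrow> complex" where
  "rhs n \<alpha> \<beta> q z =
     1 / (inverse z - z)
     * (qpochZ (of_real \<alpha>) (of_real q) n / qpochZ (of_real \<beta>) (of_real q) n)
     * ( z powi (- n - 1) * phi \<alpha> \<beta> q z 1
           * phi \<alpha> \<beta> q (inverse z) (of_real q ^ nat (n + 1))
       - z powi (n + 1) * phi \<alpha> \<beta> q (inverse z) 1
           * phi \<alpha> \<beta> q z (of_real q ^ nat (n + 1)))"

text \<open>Exceptional points: z in \<plusminus>q^{Z/2}, i.e. z^2 a (integer) power of q.\<close>
definition exceptional :: "real \<Rightarrow> complex \<Rightarrow> bool" where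
  "exceptional q z \<longleftrightarrow> (\<exists>m::int. z^2 = of_real q powi m)"

end

theory Submission
  imports Defs
begin


definition cf :: "real \<Rightarrow> real \<Rightarrow> real \<Rightarrow> complex \<Rightarrow> nat \<Rightarrow> complex" where
  "cf \<alpha> \<beta> q z k = apoch \<alpha> \<beta> q z k / (qpoch (of_real q * z^2) (of_real q) k * qpoch (of_real q) (of_real q) k)"

definition fac :: "real \<Rightarrow> real \<Rightarrow> real \<Rightarrow> complex \<Rightarrow> nat \<Rightarrow> complex" where
  "fac \<alpha> \<beta> q z k = of_real \<alpha> * (1 + z^2 * of_real q ^ (2*k)) - of_real \<beta> * of_real q ^ k * (1 + z^2)"

definition dfac :: "real \<Rightarrow> complex \<Rightarrow> nat \<Rightarrow> complex" where
  "dfac q z k = (1 - of_real q * z^2 * of_real q ^ k) * (1 - of_real q * of_real q ^ k)"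

lemma apoch_Suc: "apoch \<alpha> \<beta> q z (Suc k) = apoch \<alpha> \<beta> q z k * fac \<alpha> \<beta> q z k"
  by (simp add: apoch_def fac_def)

lemma qpoch_Suc: "qpoch a b (Suc k) = qpoch a b k * (1 - a * b ^ k)"
  by (simp add: qpoch_def)

lemma phi_cf: "phi \<alpha> \<beta> q z t = (\<Sum>k. cf \<alpha> \<beta> q z k * t ^ k)"
  unfolding phi_def cf_def by simp

lemma cf_0[simp]: "cf \<alpha> \<beta> q z 0 = 1"
  by (simp add: cf_def apoch_def qpoch_def)

locale setting =
  fixes q \<alpha> \<beta> :: real and z :: complex
  assumes q0: "0 < q" and q1: "q < 1" and a1: "\<bar>\<alpha>\<bar> < 1"
    and H: "\<And>j. of_real q * z^2 * of_real q ^ j \<noteq> (1::complex)"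
begin

lemma qq_nz: "1 - of_real q * of_real q ^ j \<noteq> (0::complex)"
proof
  assume "1 - of_real q * of_real q ^ j = (0::complex)"
  hence "complex_of_real (q ^ Suc j) = of_real 1" by simp
  hence "q ^ Suc j = 1" using of_real_eq_iff by blast
  moreover have "q ^ Suc j < 1" using q0 q1 power_less_one_iff[of q "Suc j"] by linarith
  ultimately show False by simp
qed

lemma qz_nz: "1 - of_real q * z^2 * of_real q ^ j \<noteq> (0::complex)"
  using H[of j] by simp

lemma dfac_nz: "dfac q z k \<noteq> 0"
  unfolding dfac_def using qq_nz qz_nz by simp

lemma qpoch_nz: "qpoch (of_real q * z^2) (of_real q) k \<noteq> 0" "qpoch (of_real q) (of_real q) k \<noteq> 0"
  unfolding qpoch_def using qq_nz qz_nz by auto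

lemma cf_Suc: "cf \<alpha> \<beta> q z (Suc k) = cf \<alpha> \<beta> q z k * fac \<alpha> \<beta> q z k / dfac q z k"
  unfolding cf_def apoch_Suc qpoch_Suc dfac_def using qpoch_nz[of k] qq_nz[of k] qz_nz[of k]
  by (simp add: field_simps)

lemma cf_Suc': "cf \<alpha> \<beta> q z (Suc k) * dfac q z k = cf \<alpha> \<beta> q z k * fac \<alpha> \<beta> q z k"
  using cf_Suc dfac_nz by simp

lemma Qpow_lim: "(\<lambda>k. (of_real q :: complex) ^ k) \<longlonglongrightarrow> 0"
  by (rule LIMSEQ_power_zero) (use q0 q1 in simp)

lemma fac_lim: "(\<lambda>k. fac \<alpha> \<beta> q z k / dfac q z k) \<longlonglongrightarrow> of_real \<alpha>"
proof -
  have e: "fac \<alpha> \<beta> q z k = of_real \<alpha> * (1 + z^2 * (of_real q ^ k)^2) - of_real \<beta> * of_real q ^ k * (1 + z^2)" for k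
    unfolding fac_def by (simp add: power_mult[symmetric] mult.commute)
  have "(\<lambda>k. (of_real \<alpha> * (1 + z^2 * (of_real q ^ k)^2) - of_real \<beta> * of_real q ^ k * (1 + z^2)) /
      ((1 - of_real q * z^2 * of_real q ^ k) * (1 - of_real q * of_real q ^ k)))
     \<longlonglongrightarrow> (of_real \<alpha> * (1 + z^2 * 0^2) - of_real \<beta> * 0 * (1 + z^2)) /
      ((1 - of_real q * z^2 * 0) * (1 - of_real q * 0))"
    by (intro tendsto_intros Qpow_lim) simp
  thus ?thesis unfolding e dfac_def by simp
qed

lemma summable_norm_cf: "summable (\<lambda>k. norm (cf \<alpha> \<beta> q z k))"
proof -
  define c where "c = (1 + \<bar>\<alpha>\<bar>) / 2"
  have c1: "c < 1" and c2: "\<bar>\<alpha>\<bar> < c" using a1 by (auto simp: c_def)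
  have "(\<lambda>k. norm (fac \<alpha> \<beta> q z k / dfac q z k)) \<longlonglongrightarrow> norm (of_real \<alpha> :: complex)"
    by (intro tendsto_intros fac_lim)
  hence "eventually (\<lambda>k. norm (fac \<alpha> \<beta> q z k / dfac q z k) < c) sequentially"
    using c2 by (intro order_tendstoD) auto
  then obtain N where N: "\<And>k. k \<ge> N \<Longrightarrow> norm (fac \<alpha> \<beta> q z k / dfac q z k) < c"
    unfolding eventually_sequentially by blast
  show ?thesis
  proof (rule summable_ratio_test[OF c1])
    fix k assume "k \<ge> N"
    hence "norm (fac \<alpha> \<beta> q z k / dfac q z k) \<le> c" using N by fastforce
    hence "norm (cf \<alpha> \<beta> q z k) * norm (fac \<alpha> \<beta> q z k / dfac q z k) \<le> norm (cf \<alpha> \<beta> q z k) * c"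
      by (intro mult_left_mono) auto
    thus "norm (norm (cf \<alpha> \<beta> q z (Suc k))) \<le> c * norm (norm (cf \<alpha> \<beta> q z k))"
      by (simp add: cf_Suc norm_mult norm_divide mult.commute)
  qed
qed

lemma summable_cf: "norm t \<le> 1 \<Longrightarrow> summable (\<lambda>k. cf \<alpha> \<beta> q z k * t ^ k)"
  by (rule summable_comparison_test'[OF summable_norm_cf, of 0])
     (auto simp: norm_mult norm_power intro!: mult_left_le power_le_one)

lemma sums_cf: "norm t \<le> 1 \<Longrightarrow> (\<lambda>k. cf \<alpha> \<beta> q z k * t ^ k) sums phi \<alpha> \<beta> q z t"
  unfolding phi_cf by (rule summable_sums[OF summable_cf])

lemma phi_near: assumes "norm t \<le> 1"
  shows "norm (phi \<alpha> \<beta> q z t - 1) \<le> norm t * (\<Sum>k. norm (cf \<alpha> \<beta> q z (Suc k)))"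
proof -
  have s1: "summable (\<lambda>k. norm (cf \<alpha> \<beta> q z (Suc k)))"
    using summable_norm_cf by (subst summable_Suc_iff)
  have "phi \<alpha> \<beta> q z t - 1 = (\<Sum>k. cf \<alpha> \<beta> q z (Suc k) * t ^ Suc k)"
    unfolding phi_cf using suminf_split_head[OF summable_cf[OF assms]] by simp
  also have "norm \<dots> \<le> (\<Sum>k. norm (cf \<alpha> \<beta> q z (Suc k) * t ^ Suc k))"
    apply (rule summable_norm)
    apply (rule summable_comparison_test'[OF s1, of 0])
    using assms by (auto simp: norm_mult norm_power intro!: mult_left_le power_le_one mult_le_one)
  also have "\<dots> \<le> (\<Sum>k. norm t * norm (cf \<alpha> \<beta> q z (Suc k)))"
  proof (rule suminf_le)
    fix k
    have "norm t ^ Suc k \<le> norm t" using assms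
      by (simp add: mult_left_le power_le_one)
    thus "norm (cf \<alpha> \<beta> q z (Suc k) * t ^ Suc k) \<le> norm t * norm (cf \<alpha> \<beta> q z (Suc k))"
      unfolding norm_mult norm_power by (metis mult.commute mult_left_mono norm_ge_zero)
  next
    show "summable (\<lambda>k. norm (cf \<alpha> \<beta> q z (Suc k) * t ^ Suc k))"
      by (rule summable_comparison_test'[OF s1, of 0])
         (use assms in \<open>auto simp: norm_mult norm_power intro!: mult_left_le power_le_one mult_le_one\<close>)
    show "summable (\<lambda>k. norm t * norm (cf \<alpha> \<beta> q z (Suc k)))"
      using s1 by (rule summable_mult)
  qed
  also have "\<dots> = norm t * (\<Sum>k. norm (cf \<alpha> \<beta> q z (Suc k)))"
    using s1 by (rule suminf_mult)
  finally show ?thesis .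
qed

lemma phi_lim: "(\<lambda>n. phi \<alpha> \<beta> q z (of_real q ^ n)) \<longlonglongrightarrow> 1"
proof -
  define S where "S = (\<Sum>k. norm (cf \<alpha> \<beta> q z (Suc k)))"
  have nq: "norm ((of_real q :: complex) ^ n) = q ^ n" for n using q0 by (simp add: norm_power)
  have "(\<lambda>n. phi \<alpha> \<beta> q z (of_real q ^ n) - 1) \<longlonglongrightarrow> 0"
  proof (rule Lim_null_comparison)
    show "\<forall>\<^sub>F n in sequentially. norm (phi \<alpha> \<beta> q z (of_real q ^ n) - 1) \<le> q ^ n * S"
      using phi_near[of "of_real q ^ _"] nq q0 q1 unfolding S_def
      by (intro always_eventually allI) (metis less_eq_real_def power_le_one)
    show "(\<lambda>n. q ^ n * S) \<longlonglongrightarrow> 0"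
      using q0 q1 by (intro tendsto_mult_left_zero LIMSEQ_power_zero) auto
  qed
  thus ?thesis by (simp add: Lim_null[symmetric])
qed


lemma qdiff: assumes t: "norm t \<le> 1"
  shows "(1 - of_real \<alpha> * t) * (phi \<alpha> \<beta> q z t + z^2 * phi \<alpha> \<beta> q z ((of_real q)^2 * t))
       = (1 + z^2) * (1 - of_real \<beta> * t) * phi \<alpha> \<beta> q z (of_real q * t)"
proof -
  define Q where "Q = (of_real q :: complex)"
  define c where "c = cf \<alpha> \<beta> q z"
  define P where "P = phi \<alpha> \<beta> q z t"
  define V where "V = phi \<alpha> \<beta> q z (Q * t)"
  define R where "R = phi \<alpha> \<beta> q z (Q^2 * t)"
  have nQ: "norm Q \<le> 1" "norm (Q^2) \<le> 1" using q0 q1 by (auto simp: Q_def norm_power power_le_one)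
  have t1: "norm (Q * t) \<le> 1" "norm (Q^2 * t) \<le> 1"
    using nQ t by (auto simp: norm_mult intro: mult_le_one)
  have sP: "(\<lambda>k. c k * t^k) sums P" unfolding c_def P_def by (rule sums_cf[OF t])
  have sV: "(\<lambda>k. c k * (Q*t)^k) sums V" unfolding c_def V_def by (rule sums_cf[OF t1(1)])
  have sR: "(\<lambda>k. c k * (Q^2*t)^k) sums R" unfolding c_def R_def by (rule sums_cf[OF t1(2)])
  define g where "g k = c k * t^k * ((1 - Q^k) * (1 - z^2 * Q^k))" for k
  have s1: "(\<lambda>k. c k * t^k - (1+z^2) * (c k * (Q*t)^k) + z^2 * (c k * (Q^2*t)^k)) sums
      (P - (1+z^2) * V + z^2 * R)"
    by (intro sums_add sums_diff sums_mult sP sV sR)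
  have e1: "c k * t^k - (1+z^2) * (c k * (Q*t)^k) + z^2 * (c k * (Q^2*t)^k) = g k" for k
    unfolding g_def by (simp add: power_mult_distrib power_mult[symmetric] mult.commute[of 2] power2_eq_square algebra_simps)
  have g1: "g sums (P - (1+z^2) * V + z^2 * R)" using s1 unfolding e1 .
  have s2: "(\<lambda>k. t * (of_real \<alpha> * (c k * t^k) - of_real \<beta> * (1+z^2) * (c k * (Q*t)^k)
        + of_real \<alpha> * z^2 * (c k * (Q^2*t)^k))) sums
      (t * (of_real \<alpha> * P - of_real \<beta> * (1+z^2) * V + of_real \<alpha> * z^2 * R))"
    by (intro sums_add sums_diff sums_mult sP sV sR)
  have e2: "t * (of_real \<alpha> * (c k * t^k) - of_real \<beta> * (1+z^2) * (c k * (Q*t)^k)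
        + of_real \<alpha> * z^2 * (c k * (Q^2*t)^k)) = g (Suc k)" for k
  proof -
    have "g (Suc k) = c (Suc k) * dfac q z k * t ^ Suc k"
      unfolding g_def dfac_def Q_def by (simp add: algebra_simps)
    also have "\<dots> = c k * fac \<alpha> \<beta> q z k * t ^ Suc k" unfolding c_def cf_Suc' ..
    also have "\<dots> = t * (of_real \<alpha> * (c k * t^k) - of_real \<beta> * (1+z^2) * (c k * (Q*t)^k)
        + of_real \<alpha> * z^2 * (c k * (Q^2*t)^k))"
    proof -
      have pq: "Q^(2*k) = Q^k*Q^k" "(Q^2)^k = Q^k*Q^k"
        by (simp_all add: power_mult[symmetric] mult_2 power_add mult.commute[of 2])
      show ?thesis unfolding fac_def Q_def[symmetric] power_mult_distrib pq
        by (simp add: algebra_simps)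
    qed
    finally show ?thesis ..
  qed
  have "(\<lambda>k. g (Suc k)) sums (t * (of_real \<alpha> * P - of_real \<beta> * (1+z^2) * V + of_real \<alpha> * z^2 * R))"
    using s2 unfolding e2 .
  hence g2: "g sums (t * (of_real \<alpha> * P - of_real \<beta> * (1+z^2) * V + of_real \<alpha> * z^2 * R))"
    unfolding sums_Suc_iff by (simp add: g_def)
  have E: "P - (1+z^2) * V + z^2 * R = t * (of_real \<alpha> * P - of_real \<beta> * (1+z^2) * V + of_real \<alpha> * z^2 * R)"
    using g1 g2 by (rule sums_unique2)
  have "(1 - of_real \<alpha> * t) * (P + z^2 * R) - (1 + z^2) * (1 - of_real \<beta> * t) * V
     = (P - (1+z^2) * V + z^2 * R) - t * (of_real \<alpha> * P - of_real \<beta> * (1+z^2) * V + of_real \<alpha> * z^2 * R)"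
    by (simp add: algebra_simps)
  with E show ?thesis unfolding P_def V_def R_def Q_def by simp
qed

end


lemma pp_sol:
  fixes x C :: complex and Z :: "nat \<Rightarrow> complex"
  assumes q0: "0 < q" and q1: "q < 1" and a1: "\<bar>\<alpha>\<bar> < 1" and b1: "\<beta> < 1"
    and rec: "\<And>k. (1 - of_real \<alpha> * of_real q ^ k) * (Z (k+2) + Z k) = x * (1 - of_real \<beta> * of_real q ^ k) * Z (k+1)"
    and Z0: "Z 0 = 0" and Z1: "Z 1 = C" and C: "C \<noteq> 0"
  shows "pp \<alpha> \<beta> q k x = qpoch (of_real \<alpha>) (of_real q) (k - 1) / qpoch (of_real \<beta>) (of_real q) (k - 1) * Z k / C"
proof -
  have aq: "\<alpha> * q ^ j < 1" for j
  proof -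
    have "q ^ j \<le> 1" using q0 q1 by (simp add: power_le_one)
    hence "\<bar>\<alpha> * q ^ j\<bar> \<le> \<bar>\<alpha>\<bar>" using q0 by (simp add: abs_mult mult_left_le)
    thus ?thesis using a1 by linarith
  qed
  have bq: "\<beta> * q ^ j < 1" for j
  proof (cases "\<beta> \<le> 0")
    case True thus ?thesis using q0 by (smt (verit) mult_nonpos_nonneg zero_le_power)
  next
    case False
    have "q ^ j \<le> 1" using q0 q1 by (simp add: power_le_one)
    hence "\<beta> * q ^ j \<le> \<beta>" using False by (simp add: mult_left_le)
    thus ?thesis using b1 by linarith
  qed
  define g where "g j = (1 - of_real \<alpha> * of_real q ^ j) / (1 - of_real \<beta> * of_real q ^ j :: complex)" for j
  define h where "h j = qpoch (of_real \<alpha>) (of_real q) j / qpoch (of_real \<beta>) (of_real q) j" for j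
  have anz: "1 - of_real \<alpha> * of_real q ^ j \<noteq> (0::complex)" for j
  proof
    assume "1 - of_real \<alpha> * of_real q ^ j = (0::complex)"
    hence "complex_of_real (\<alpha> * q ^ j) = of_real 1" by simp
    hence "\<alpha> * q ^ j = 1" using of_real_eq_iff by blast
    with aq[of j] show False by simp
  qed
  have bnz: "1 - of_real \<beta> * of_real q ^ j \<noteq> (0::complex)" for j
  proof
    assume "1 - of_real \<beta> * of_real q ^ j = (0::complex)"
    hence "complex_of_real (\<beta> * q ^ j) = of_real 1" by simp
    hence "\<beta> * q ^ j = 1" using of_real_eq_iff by blast
    with bq[of j] show False by simp
  qed
  have qbnz: "qpoch (of_real \<beta>) (of_real q) j \<noteq> 0" for j
    unfolding qpoch_def using bnz by simp
  have hS: "h (Suc j) = h j * g j" for j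
    unfolding h_def g_def qpoch_Suc using qbnz[of j] bnz[of j] by (simp add: field_simps)
  have gt_eq: "complex_of_real (gt \<alpha> \<beta> q (int j)) = g j" for j
    unfolding gt_def g_def by simp
  have h0: "h 0 = 1" by (simp add: h_def qpoch_def)
  show ?thesis
  proof (induction k rule: less_induct)
    case (less k)
    show ?case
    proof (cases k)
      case 0 thus ?thesis by (simp add: Z0)
    next
      case (Suc k1)
      show ?thesis
      proof (cases k1)
        case 0 thus ?thesis using Suc C Z1 by (simp add: qpoch_def)
      next
        case (Suc k2)
        note k = \<open>k = Suc k1\<close> Suc
        show ?thesis
        proof (cases k2)
          case 0
          have r: "(1 - of_real \<alpha>) * Z 2 = x * (1 - of_real \<beta>) * C"
            using rec[of 0] Z0 Z1 by (simp add: numeral_2_eq_2)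
          have "qpoch (of_real \<alpha>) (of_real q) 1 / qpoch (of_real \<beta>) (of_real q) 1 * Z 2 / C = x"
            using r C bnz[of 0] by (simp add: qpoch_def field_simps)
          thus ?thesis using k 0 by (simp add: numeral_2_eq_2)
        next
          case (Suc i)
          have k3: "k = Suc (Suc (Suc i))" using k Suc by simp
          have IH1: "pp \<alpha> \<beta> q (Suc (Suc i)) x = h (Suc i) * Z (Suc (Suc i)) / C"
            using less[of "Suc (Suc i)"] k3 by (simp add: h_def)
          have IH2: "pp \<alpha> \<beta> q (Suc i) x = h i * Z (Suc i) / C"
            using less[of "Suc i"] k3 by (simp add: h_def)
          have r: "(1 - of_real \<alpha> * of_real q ^ Suc i) * (Z (Suc (Suc (Suc i))) + Z (Suc i)) = x * (1 - of_real \<beta> * of_real q ^ Suc i) * Z (Suc (Suc i))"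
            using rec[of "Suc i"] by (simp add: numeral_2_eq_2 add.commute)
          have r': "Z (Suc (Suc (Suc i))) = x * Z (Suc (Suc i)) / g (Suc i) - Z (Suc i)"
            using r anz[of "Suc i"] bnz[of "Suc i"] unfolding g_def by (simp add: field_simps)
          have "pp \<alpha> \<beta> q k x = x * pp \<alpha> \<beta> q (Suc (Suc i)) x
              - complex_of_real (gt \<alpha> \<beta> q (int (Suc i) - 1) * gt \<alpha> \<beta> q (int (Suc i))) * pp \<alpha> \<beta> q (Suc i) x"
            using k3 by simp
          also have "int (Suc i) - 1 = int i" by simp
          also have "x * pp \<alpha> \<beta> q (Suc (Suc i)) x
              - complex_of_real (gt \<alpha> \<beta> q (int i) * gt \<alpha> \<beta> q (int (Suc i))) * pp \<alpha> \<beta> q (Suc i) x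
              = h (Suc (Suc i)) * Z (Suc (Suc (Suc i))) / C"
          proof -
            have G: "g (Suc i) \<noteq> 0" unfolding g_def using anz[of "Suc i"] bnz[of "Suc i"] by simp
            show ?thesis
              unfolding IH1 IH2 of_real_mult gt_eq hS r' using G C
              by (simp add: field_simps)
          qed
          finally show ?thesis using k3 by (simp add: h_def)
        qed
      qed
    qed
  qed
qed



lemma alg1: fixes c wk zk a1 b1 Bk B2 Ak A2 w2 z2 :: complex
  shows "c * ((wk*w2) * a1 * B2 - (zk*z2) * b1 * A2 + (wk * a1 * Bk - zk * b1 * Ak)) = wk * a1 * (c * (Bk + w2 * B2)) - zk * b1 * (c * (Ak + z2 * A2))"
  by (simp add: algebra_simps)
lemma alg2: fixes z w d wk zk a1 b1 B1 A1' :: complex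
  shows "wk * a1 * ((z*w + w*w) * d * B1) - zk * b1 * ((z*w + z*z) * d * A1') = (z + w) * d * ((wk * w) * a1 * B1 - (zk * z) * b1 * A1')"
  by (simp add: algebra_simps)

lemma main_ident:
  fixes q \<alpha> \<beta> :: real and z :: complex and n :: int
  assumes q0: "0 < q" and q1: "q < 1" and a1: "\<bar>\<alpha>\<bar> < 1" and b1: "\<beta> < 1"
    and z0: "z \<noteq> 0" and ne: "\<not> exceptional q z" and n1: "n \<ge> -1"
  shows "pol n \<alpha> \<beta> q (z + inverse z) = rhs n \<alpha> \<beta> q z"
proof -
  define Q where "Q = (of_real q :: complex)"
  define w where "w = inverse z"
  have Q0: "Q \<noteq> 0" using q0 by (simp add: Q_def)
  have zw: "z * w = 1" using z0 by (simp add: w_def)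
  have Hz: "of_real q * z^2 * of_real q ^ j \<noteq> (1::complex)" for j
  proof
    assume "of_real q * z^2 * of_real q ^ j = (1::complex)"
    hence "z^2 * Q ^ Suc j = 1" by (simp add: Q_def algebra_simps)
    hence "inverse (Q ^ Suc j) = z^2" by (intro inverse_unique) (simp add: mult.commute)
    moreover have "Q powi (- int (Suc j)) = inverse (Q ^ Suc j)" by (simp only: power_int_minus power_int_of_nat)
    ultimately have "z^2 = Q powi (- int (Suc j))" by simp
    thus False using ne unfolding exceptional_def Q_def by blast
  qed
  have Hw: "of_real q * w^2 * of_real q ^ j \<noteq> (1::complex)" for j
  proof
    assume "of_real q * w^2 * of_real q ^ j = (1::complex)"
    hence "w^2 * Q ^ Suc j = 1" by (simp add: Q_def algebra_simps)
    hence "Q ^ Suc j = z^2" using z0 by (simp add: w_def field_simps power_inverse)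
    hence "z^2 = Q powi (int (Suc j))" by (simp only: power_int_of_nat)
    thus False using ne unfolding exceptional_def Q_def by blast
  qed
  have z21: "z^2 \<noteq> 1"
  proof
    assume "z^2 = 1" hence "z^2 = Q powi 0" by simp
    thus False using ne unfolding exceptional_def Q_def by blast
  qed
  interpret SZ: setting q \<alpha> \<beta> z using q0 q1 a1 Hz by unfold_locales auto
  interpret SW: setting q \<alpha> \<beta> w using q0 q1 a1 Hw by unfold_locales auto
  define A where "A = phi \<alpha> \<beta> q z"
  define B where "B = phi \<alpha> \<beta> q w"
  have nQk: "norm (Q ^ k) \<le> 1" for k using q0 q1 by (simp add: Q_def norm_power power_le_one)
  have qdA: "(1 - of_real \<alpha> * Q^k) * (A (Q^k) + z^2 * A (Q^Suc (Suc k))) = (1 + z^2) * (1 - of_real \<beta> * Q^k) * A (Q^Suc k)" for k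
    using SZ.qdiff[OF nQk[of k]] unfolding A_def Q_def by (simp add: power2_eq_square mult.assoc)
  have qdB: "(1 - of_real \<alpha> * Q^k) * (B (Q^k) + w^2 * B (Q^Suc (Suc k))) = (1 + w^2) * (1 - of_real \<beta> * Q^k) * B (Q^Suc k)" for k
    using SW.qdiff[OF nQk[of k]] unfolding B_def Q_def by (simp add: power2_eq_square mult.assoc)
  have qdB': "(1 - of_real \<alpha> * Q^k) * (z^2 * B (Q^k) + B (Q^Suc (Suc k))) = (z^2 + 1) * (1 - of_real \<beta> * Q^k) * B (Q^Suc k)" for k
  proof -
    define c where "c = 1 - of_real \<alpha> * Q^k"
    define d where "d = 1 - of_real \<beta> * Q^k"
    have zw2: "z^2 * w^2 = 1" using zw by (metis power_mult_distrib power_one)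
    have "c * (z^2 * B (Q^k) + B (Q^Suc (Suc k))) = c * (z^2 * B (Q^k) + (z^2 * w^2) * B (Q^Suc (Suc k)))"
      unfolding zw2 by simp
    also have "\<dots> = z^2 * (c * (B (Q^k) + w^2 * B (Q^Suc (Suc k))))" by (simp add: algebra_simps)
    also have "\<dots> = z^2 * ((1 + w^2) * d * B (Q^Suc k))" using qdB[of k] unfolding c_def d_def by simp
    also have "\<dots> = (z^2 + z^2 * w^2) * d * B (Q^Suc k)" by (simp add: algebra_simps)
    finally show ?thesis unfolding zw2 c_def d_def .
  qed
  have anz: "1 - of_real \<alpha> * Q^k \<noteq> 0" for k
  proof
    assume "1 - of_real \<alpha> * Q^k = 0"
    hence "complex_of_real (\<alpha> * q ^ k) = of_real 1" by (simp add: Q_def)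
    hence e: "\<alpha> * q ^ k = 1" using of_real_eq_iff by blast
    have "q ^ k \<le> 1" using q0 q1 by (simp add: power_le_one)
    hence "\<bar>\<alpha> * q ^ k\<bar> \<le> \<bar>\<alpha>\<bar>" using q0 by (simp add: abs_mult mult_left_le)
    thus False using a1 e by simp
  qed
  define D where "D k = w * A (Q^k) * B (Q^Suc k) - z * A (Q^Suc k) * B (Q^k)" for k
  have DS: "D (Suc k) = D k" for k
  proof -
    define a0 a1 a2 b0 b1 b2 where "a0 = A (Q^k)" "a1 = A (Q^Suc k)" "a2 = A (Q^Suc (Suc k))"
      "b0 = B (Q^k)" "b1 = B (Q^Suc k)" "b2 = B (Q^Suc (Suc k))"
    define c where "c = 1 - of_real \<alpha> * Q^k"
    have eA: "c * (a0 + z^2 * a2) = (1 + z^2) * (1 - of_real \<beta> * Q^k) * a1"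
      using qdA[of k] unfolding a0_a1_a2_b0_b1_b2_def c_def .
    have eB: "c * (z^2 * b0 + b2) = (z^2 + 1) * (1 - of_real \<beta> * Q^k) * b1"
      using qdB'[of k] unfolding a0_a1_a2_b0_b1_b2_def c_def .
    have "z * c * (D (Suc k) - D k) = c * ((z*w) * a1 * b2 - z^2 * a2 * b1 - (z*w) * a0 * b1 + z^2 * a1 * b0)"
      unfolding D_def a0_a1_a2_b0_b1_b2_def by (simp add: algebra_simps power2_eq_square)
    also have "\<dots> = a1 * (c * (z^2 * b0 + b2)) - b1 * (c * (a0 + z^2 * a2))"
      unfolding zw by (simp add: algebra_simps)
    also have "\<dots> = 0" unfolding eA eB by (simp add: algebra_simps)
    finally have "z * c * (D (Suc k) - D k) = 0" .
    moreover have "c \<noteq> 0" using anz unfolding c_def by simp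
    ultimately show ?thesis using z0 by simp
  qed
  have Dc: "D k = D 0" for k by (induction k) (simp_all add: DS)
  have L1: "D \<longlonglongrightarrow> w * 1 * 1 - z * 1 * 1"
    unfolding D_def A_def B_def Q_def
    by (intro tendsto_intros SZ.phi_lim SW.phi_lim LIMSEQ_Suc)
  have L2: "D \<longlonglongrightarrow> D 0"
    by (rule Lim_transform_eventually[OF tendsto_const]) (intro always_eventually allI, rule Dc[symmetric])
  have "D 0 = w * 1 * 1 - z * 1 * 1" by (rule LIMSEQ_unique[OF L2 L1])
  hence D0: "D 0 = w - z" by simp
  define Zs where "Zs k = w^k * A 1 * B (Q^k) - z^k * B 1 * A (Q^k)" for k
  have Zrec: "(1 - of_real \<alpha> * of_real q ^ k) * (Zs (k+2) + Zs k) = (z + inverse z) * (1 - of_real \<beta> * of_real q ^ k) * Zs (k+1)" for k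
  proof -
    define c where "c = 1 - of_real \<alpha> * Q^k"
    define d where "d = 1 - of_real \<beta> * Q^k"
    have eA: "c * (A (Q^k) + z^2 * A (Q^Suc (Suc k))) = (1 + z^2) * d * A (Q^Suc k)"
      using qdA[of k] unfolding c_def d_def .
    have eB: "c * (B (Q^k) + w^2 * B (Q^Suc (Suc k))) = (1 + w^2) * d * B (Q^Suc k)"
      using qdB[of k] unfolding c_def d_def .
    have p: "w^(k+2) = w^k * w^2" "z^(k+2) = z^k * z^2" "Q^(k+2) = Q^Suc (Suc k)"
      by (simp_all add: power_add power2_eq_square)
    have p1: "w^(k+1) = w^k * w" "z^(k+1) = z^k * z" "Q^(k+1) = Q^Suc k" by simp_all
    have "c * (Zs (k+2) + Zs k) = w^k * A 1 * (c * (B (Q^k) + w^2 * B (Q^Suc (Suc k))))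
         - z^k * B 1 * (c * (A (Q^k) + z^2 * A (Q^Suc (Suc k))))"
      unfolding Zs_def p by (rule alg1)
    also have "\<dots> = w^k * A 1 * ((1 + w^2) * d * B (Q^Suc k)) - z^k * B 1 * ((1 + z^2) * d * A (Q^Suc k))"
      unfolding eA eB ..
    also have "\<dots> = w^k * A 1 * ((z*w + w^2) * d * B (Q^Suc k)) - z^k * B 1 * ((z*w + z^2) * d * A (Q^Suc k))"
      unfolding zw ..
    also have "\<dots> = (z + w) * d * Zs (k+1)"
      unfolding Zs_def p1 power2_eq_square by (rule alg2)
    finally show ?thesis unfolding c_def d_def Q_def w_def .
  qed
  have Z0: "Zs 0 = 0" unfolding Zs_def by simp
  have Z1: "Zs 1 = w - z" using D0 unfolding Zs_def D_def by (simp add: algebra_simps)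
  have C0: "w - z \<noteq> 0"
  proof
    assume "w - z = 0" hence "z * w = z * z" by simp
    hence "z^2 = 1" using zw by (simp add: power2_eq_square)
    with z21 show False by simp
  qed
  have PP: "pp \<alpha> \<beta> q k (z + inverse z) = qpoch (of_real \<alpha>) (of_real q) (k - 1) / qpoch (of_real \<beta>) (of_real q) (k - 1) * Zs k / (w - z)" for k
    by (rule pp_sol[OF q0 q1 a1 b1 Zrec Z0 Z1 C0])
  show ?thesis
  proof (cases "n = -1")
    case True thus ?thesis unfolding pol_def rhs_def by simp
  next
    case False
    define m where "m = nat n"
    have m: "n = int m" using False n1 unfolding m_def by simp
    have "pol n \<alpha> \<beta> q (z + inverse z) = qpoch (of_real \<alpha>) (of_real q) m / qpoch (of_real \<beta>) (of_real q) m * Zs (Suc m) / (w - z)"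
      unfolding pol_def PP m by (simp add: nat_add_distrib)
    also have "\<dots> = rhs n \<alpha> \<beta> q z"
    proof -
      have e1: "z powi (- int m - 1) = w ^ Suc m"
      proof -
        have "z powi (- int m - 1) = z powi (- int (Suc m))" by (rule arg_cong[where f="\<lambda>e. z powi e"]) simp
        also have "\<dots> = inverse (z ^ Suc m)" by (simp only: power_int_minus power_int_of_nat)
        also have "\<dots> = w ^ Suc m" by (simp only: w_def power_inverse)
        finally show ?thesis .
      qed
      have e2: "z powi (int m + 1) = z ^ Suc m"
      proof -
        have "z powi (int m + 1) = z powi (int (Suc m))" by (rule arg_cong[where f="\<lambda>e. z powi e"]) simp
        also have "\<dots> = z ^ Suc m" by (simp only: power_int_of_nat)
        finally show ?thesis .
      qed
      have e3: "nat (int m + 1) = Suc m" by simp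
      have e4: "qpochZ a b (int m) = qpoch a b m" for a b by (simp add: qpochZ_def)
      have R: "rhs n \<alpha> \<beta> q z = 1 / (w - z) * (qpoch (of_real \<alpha>) (of_real q) m / qpoch (of_real \<beta>) (of_real q) m) * Zs (Suc m)"
        unfolding Zs_def rhs_def m e1 e2 e3 e4 A_def B_def Q_def w_def ..
      show ?thesis unfolding R by simp
    qed
    finally show ?thesis .
  qed
qed



lemma pp_cont: "isCont (pp \<alpha> \<beta> q k) x"
proof (induction k arbitrary: x rule: less_induct)
  case (less k)
  show ?case
  proof (cases k)
    case 0 thus ?thesis by simp
  next
    case (Suc k1)
    show ?thesis
    proof (cases k1)
      case 0 thus ?thesis using Suc by simp
    next
      case (Suc k2)
      have e: "pp \<alpha> \<beta> q k = (\<lambda>x. x * pp \<alpha> \<beta> q (Suc k2) x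
         - complex_of_real (gt \<alpha> \<beta> q (int k2 - 1) * gt \<alpha> \<beta> q (int k2)) * pp \<alpha> \<beta> q k2 x)"
        using \<open>k = Suc k1\<close> Suc by (intro ext) simp
      show ?thesis unfolding e
        using less[of "Suc k2"] less[of k2] \<open>k = Suc k1\<close> Suc
        by (intro continuous_intros) auto
    qed
  qed
qed

theorem proposition2p5:
  fixes q \<alpha> \<beta> :: real and z :: complex and n :: int
  assumes "0 < q" "q < 1" "-1 < \<alpha>" "\<alpha> < 1" "\<beta> < 1" "z \<noteq> 0" "n \<ge> -1"
  shows "(\<not> exceptional q z \<longrightarrow> pol n \<alpha> \<beta> q (z + inverse z) = rhs n \<alpha> \<beta> q z)
       \<and> (rhs n \<alpha> \<beta> q \<longlongrightarrow> pol n \<alpha> \<beta> q (z + inverse z))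
            (at z within {w. w \<noteq> 0 \<and> \<not> exceptional q w})"
proof -
  have a1: "\<bar>\<alpha>\<bar> < 1" using assms by linarith
  have I: "pol n \<alpha> \<beta> q (w + inverse w) = rhs n \<alpha> \<beta> q w" if "w \<noteq> 0" "\<not> exceptional q w" for w
    using main_ident[OF assms(1,2) a1 assms(5) that assms(7)] .
  have c: "isCont (\<lambda>w. pol n \<alpha> \<beta> q (w + inverse w)) z"
    unfolding pol_def using assms(6)
    by (intro isCont_o2[where g = "pp \<alpha> \<beta> q (nat (n + 1))", OF _ pp_cont] continuous_intros) auto
  have "((\<lambda>w. pol n \<alpha> \<beta> q (w + inverse w)) \<longlongrightarrow> pol n \<alpha> \<beta> q (z + inverse z))
      (at z within {w. w \<noteq> 0 \<and> \<not> exceptional q w})"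
    using continuous_at_imp_continuous_at_within[OF c] unfolding continuous_within .
  moreover have "eventually (\<lambda>w. pol n \<alpha> \<beta> q (w + inverse w) = rhs n \<alpha> \<beta> q w)
      (at z within {w. w \<noteq> 0 \<and> \<not> exceptional q w})"
    unfolding eventually_at_filter by (intro always_eventually) (auto intro: I)
  ultimately have "(rhs n \<alpha> \<beta> q \<longlongrightarrow> pol n \<alpha> \<beta> q (z + inverse z))
      (at z within {w. w \<noteq> 0 \<and> \<not> exceptional q w})"
    by (rule Lim_transform_eventually)
  thus ?thesis using I assms(6) by blast
qed


end
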